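(* Let $\frac12<p<1$ and let $f:\mathbb{Z}^+\to[0,\infty)$ be monotonically increasing (non-decreasing). Let $\{N_j\}_{j\ge0}$ be the discrete-time, time-inhomogeneous Markov chain on $\mathbb{N}$ with $N_0=1$, $N_1\sim\mathrm{Bern}\big(\frac{1-p}{p}\big)$, and, for $j\ge1$, conditionally on $N_j$, $N_{j+1}\sim\mathrm{Bin}\big(N_j,\frac{1-p}{p}\big)+\mathrm{Poiss}\big(\frac{1-p}{p}f(j)\big)$ with independent summands. Let $\mathbf{E}^*$ denote expectation for this chain and $K=\#\{j\in\mathbb{Z}^+:N_j=0\}$. If $$\sum_{j=1}^{\infty}e^{-\frac{1-p}{2p-1}f(j)}=\infty,$$ then $\mathbf{E}^*[K]=\infty$. *)

theory Defs
  imports "HOL-Probability.Probability"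
begin

text \<open>Poisson distribution with rate r \<ge> 0 (rate 0 is the point mass at 0;
  the library's poisson_pmf is only specified for positive rates).\<close>
definition poiss :: "real \<Rightarrow> nat pmf" where
  "poiss r = (if 0 < r then poisson_pmf r else return_pmf 0)"

text \<open>One transition of the chain from time j to time j+1, given N_j = n, with
  q = (1-p)/p.  For j = 0 (N_0 = 1) this is Bin(1,q) = Bern(q); for j \<ge> 1 it is
  Bin(n,q) + Poiss(q f(j)) with independent summands.\<close>
definition chain_step :: "real \<Rightarrow> (nat \<Rightarrow> real) \<Rightarrow> nat \<Rightarrow> nat \<Rightarrow> nat pmf" where
  "chain_step p f j n =
     (let q = (1 - p) / p in
      if j = 0 then binomial_pmf n q
      else bind_pmf (binomial_pmf n q) (\<lambda>b. map_pmf (\<lambda>c. b + c) (poiss (q * f j))))"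

primrec chain_path :: "real \<Rightarrow> (nat \<Rightarrow> real) \<Rightarrow> nat \<Rightarrow> nat list pmf" where
  "chain_path p f 0 = return_pmf [1]"
| "chain_path p f (Suc j) =
     bind_pmf (chain_path p f j) (\<lambda>xs. map_pmf (\<lambda>y. xs @ [y]) (chain_step p f j (last xs)))"

definition zero_count :: "nat \<Rightarrow> nat list \<Rightarrow> nat" where
  "zero_count n xs = card {j \<in> {1..n}. xs ! j = 0}"

text \<open>E*[K] for K = #{j \<ge> 1. N_j = 0}, via monotone convergence: the supremum
  over n of E*[#{1 \<le> j \<le> n. N_j = 0}].\<close>
definition expected_zeros :: "real \<Rightarrow> (nat \<Rightarrow> real) \<Rightarrow> ennreal" where
  "expected_zeros p f =
     (SUP n. \<integral>\<^sup>+ xs. ennreal (real (zero_count n xs)) \<partial>measure_pmf (chain_path p f n))"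

end

theory Submission imports Defs begin

lemma pgf_binomial:
  assumes q: "0 < q" "q < 1" and s: "0 \<le> s"
  shows "(\<integral>\<^sup>+k. ennreal (s ^ k) \<partial>measure_pmf (binomial_pmf n q)) = ennreal ((1 - q + q * s) ^ n)"
proof -
  have "(\<integral>\<^sup>+k. ennreal (s ^ k) \<partial>measure_pmf (binomial_pmf n q))
      = (\<Sum>k\<in>{..n}. ennreal (s ^ k) * ennreal (pmf (binomial_pmf n q) k))"
    using q by (subst nn_integral_measure_pmf_finite) auto
  also have "\<dots> = ennreal (\<Sum>k\<in>{..n}. s ^ k * pmf (binomial_pmf n q) k)"
    using q s by (subst sum_ennreal[symmetric]) (auto simp: ennreal_mult)
  also have "(\<Sum>k\<in>{..n}. s ^ k * pmf (binomial_pmf n q) k) = (\<Sum>k\<in>{..n}. of_nat (n choose k) * (q * s) ^ k * (1-q) ^ (n - k))"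
    using q by (intro sum.cong) (auto simp: power_mult_distrib)
  also have "\<dots> = (q * s + (1 - q)) ^ n" by (rule binomial_ring[symmetric])
  finally show ?thesis by (simp add: algebra_simps)
qed

lemma pgf_poiss:
  assumes r: "0 \<le> r" and s: "0 \<le> s"
  shows "(\<integral>\<^sup>+k. ennreal (s ^ k) \<partial>measure_pmf (poiss r)) = ennreal (exp (r * (s - 1)))"
proof (cases "r = 0")
  case True then show ?thesis by (simp add: poiss_def)
next
  case False
  then have r: "0 < r" using r by simp
  have sm: "(\<lambda>k. (r * s) ^ k /\<^sub>R fact k * exp (-r)) sums (exp (r * s) * exp (-r))"
    by (intro sums_mult2 exp_converges)
  have eq: "(\<lambda>k. (r * s) ^ k /\<^sub>R fact k * exp (-r)) = (\<lambda>k. pmf (poisson_pmf r) k * s ^ k)"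
    using r by (auto simp: power_mult_distrib divide_simps)
  have "(\<integral>\<^sup>+k. ennreal (s ^ k) \<partial>measure_pmf (poiss r))
     = (\<Sum>k. ennreal (pmf (poisson_pmf r) k * s ^ k))"
    using r s by (simp add: poiss_def nn_integral_measure_pmf nn_integral_count_space_nat ennreal_mult[symmetric] mult_ac)
  also have "\<dots> = ennreal (exp (r * s) * exp (-r))"
    using sm s unfolding eq by (intro sums_unique[symmetric]) (simp add: sums_ennreal)
  finally show ?thesis by (simp add: exp_add[symmetric] exp_diff algebra_simps)
qed

lemma pgf_step:
  assumes q: "0 < (1-p)/p" "(1-p)/p < 1" and s: "0 \<le> s" and f: "1 \<le> j \<Longrightarrow> 0 \<le> f j"
  shows "(\<integral>\<^sup>+k. ennreal (s ^ k) \<partial>measure_pmf (chain_step p f j m))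
     = ennreal ((1 - (1-p)/p + (1-p)/p * s) ^ m * (if j = 0 then 1 else exp ((1-p)/p * f j * (s - 1))))"
proof (cases "j = 0")
  case True
  then show ?thesis using pgf_binomial[OF q s] by (simp add: chain_step_def Let_def)
next
  case False
  define q where "q = (1-p)/p"
  have q': "0 < q" "q < 1" using q by (auto simp: q_def)
  have r: "0 \<le> q * f j" using False f q' by simp
  have "(\<integral>\<^sup>+k. ennreal (s ^ k) \<partial>measure_pmf (chain_step p f j m))
    = (\<integral>\<^sup>+b. \<integral>\<^sup>+c. ennreal (s ^ b) * ennreal (s ^ c) \<partial>measure_pmf (poiss (q * f j)) \<partial>measure_pmf (binomial_pmf m q))"
    using False s by (simp add: chain_step_def q_def[symmetric] power_add ennreal_mult)
  also have "\<dots> = (\<integral>\<^sup>+b. ennreal (s ^ b) * ennreal (exp (q * f j * (s - 1))) \<partial>measure_pmf (binomial_pmf m q))"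
    using pgf_poiss[OF r s] by (simp add: nn_integral_cmult)
  also have "\<dots> = ennreal ((1 - q + q * s) ^ m) * ennreal (exp (q * f j * (s - 1)))"
    using pgf_binomial[OF q' s] by (simp add: nn_integral_multc)
  finally show ?thesis using False q' s by (simp add: q_def[symmetric] ennreal_mult)
qed

definition marg :: "real \<Rightarrow> (nat \<Rightarrow> real) \<Rightarrow> nat \<Rightarrow> nat pmf" where
  "marg p f j = map_pmf last (chain_path p f j)"

lemma marg_Suc: "marg p f (Suc j) = bind_pmf (marg p f j) (chain_step p f j)"
  by (simp add: marg_def map_bind_pmf bind_map_pmf map_pmf_comp)

lemma chain_path_length: "xs \<in> set_pmf (chain_path p f n) \<Longrightarrow> length xs = Suc n"
  by (induction n arbitrary: xs) auto

lemma chain_path_nth: "k \<le> n \<Longrightarrow> map_pmf (\<lambda>xs. xs ! k) (chain_path p f n) = marg p f k"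
proof (induction n)
  case 0
  then show ?case by (simp add: marg_def)
next
  case (Suc n)
  show ?case
  proof (cases "k = Suc n")
    case True
    have "map_pmf (\<lambda>xs. xs ! k) (chain_path p f (Suc n)) = map_pmf last (chain_path p f (Suc n))"
      using chain_path_length[of _ p f "Suc n"] True
      by (intro map_pmf_cong) (auto simp: last_conv_nth nth_append dest: chain_path_length)
    then show ?thesis using True by (simp add: marg_def)
  next
    case False
    then have k: "k \<le> n" using Suc by simp
    have "map_pmf (\<lambda>xs. xs ! k) (chain_path p f (Suc n)) = map_pmf (\<lambda>xs. xs ! k) (chain_path p f n)"
      using chain_path_length[of _ p f n] k
      by (simp add: map_bind_pmf map_pmf_comp nth_append bind_return_pmf' map_pmf_def[symmetric] cong: bind_pmf_cong)
    then show ?thesis using Suc k by simp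
  qed
qed

lemma S_Suc:
  fixes q :: real
  shows "(\<Sum>i\<in>{1..<Suc j}. f i * q ^ (Suc j - i)) = (if j = 0 then 0 else q * f j + q * (\<Sum>i\<in>{1..<j}. f i * q ^ (j - i)))"
proof (cases "j = 0")
  case False
  then have "{1..<Suc j} = insert j {1..<j}" by auto
  then have "(\<Sum>i\<in>{1..<Suc j}. f i * q ^ (Suc j - i)) = f j * q + (\<Sum>i\<in>{1..<j}. f i * q ^ (Suc j - i))"
    by simp
  also have "(\<Sum>i\<in>{1..<j}. f i * q ^ (Suc j - i)) = (\<Sum>i\<in>{1..<j}. q * (f i * q ^ (j - i)))"
    by (intro sum.cong) (auto simp: Suc_diff_le)
  finally show ?thesis using False by (simp add: sum_distrib_left mult.commute)
qed simp

lemma marg_pgf: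
  assumes qdef: "q = (1-p)/p" and q: "0 < q" "q < 1" and f: "\<And>j. 1 \<le> j \<Longrightarrow> 0 \<le> f j"
  shows "0 \<le> s \<Longrightarrow> s \<le> 1 \<Longrightarrow> (\<integral>\<^sup>+k. ennreal (s ^ k) \<partial>measure_pmf (marg p f j))
     = ennreal ((1 - q ^ j * (1 - s)) * exp (- (1 - s) * (\<Sum>i\<in>{1..<j}. f i * q ^ (j - i))))"
proof (induction j arbitrary: s)
  case 0
  then show ?case by (simp add: marg_def)
next
  case (Suc j)
  define \<phi> where "\<phi> = 1 - q + q * s"
  define c where "c = (if j = 0 then 1 else exp (q * f j * (s - 1)))"
  have \<phi>: "0 \<le> \<phi>" "\<phi> \<le> 1" using q Suc.prems by (auto simp: \<phi>_def mult_le_one)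
  have c: "0 \<le> c" by (simp add: c_def)
  have "(\<integral>\<^sup>+k. ennreal (s ^ k) \<partial>measure_pmf (marg p f (Suc j)))
     = (\<integral>\<^sup>+m. ennreal (\<phi> ^ m) * ennreal c \<partial>measure_pmf (marg p f j))"
    unfolding marg_Suc nn_integral_bind_pmf
    using pgf_step[of p s j f] q Suc.prems f
    by (intro nn_integral_cong) (simp add: qdef[symmetric] \<phi>_def c_def ennreal_mult)
  also have "\<dots> = ennreal ((1 - q ^ j * (1 - \<phi>)) * exp (- (1 - \<phi>) * (\<Sum>i\<in>{1..<j}. f i * q ^ (j - i)))) * ennreal c"
    using Suc.IH[OF \<phi>] by (simp add: nn_integral_multc)
  also have "\<dots> = ennreal ((1 - q ^ Suc j * (1 - s)) * exp (- (1 - s) * (\<Sum>i\<in>{1..<Suc j}. f i * q ^ (Suc j - i))))"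
  proof -
    have "(1 - q ^ j * (1 - \<phi>)) * exp (- (1 - \<phi>) * (\<Sum>i\<in>{1..<j}. f i * q ^ (j - i))) * c
      = (1 - q ^ Suc j * (1 - s)) * exp (- (1 - s) * (\<Sum>i\<in>{1..<Suc j}. f i * q ^ (Suc j - i)))"
      unfolding S_Suc c_def \<phi>_def
      by (auto simp: exp_add[symmetric] algebra_simps)
    moreover have "0 \<le> (1 - q ^ j * (1 - \<phi>))" using \<phi> q
      by (smt (verit, ccfv_SIG) mult_le_one power_le_one zero_le_power)
    ultimately show ?thesis using c by (simp add: ennreal_mult[symmetric])
  qed
  finally show ?case .
qed

lemma zero_count_integral:
  "(\<integral>\<^sup>+xs. ennreal (real (zero_count n xs)) \<partial>measure_pmf (chain_path p f n))
    = (\<Sum>j\<in>{1..n}. \<integral>\<^sup>+y. ennreal (0 ^ y) \<partial>measure_pmf (marg p f j))"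
proof -
  have zc: "real (zero_count n xs) = (\<Sum>j\<in>{1..n}. if xs ! j = 0 then 1 else 0)" for xs
    unfolding zero_count_def by (simp add: sum.inter_filter[symmetric])
  have "(\<integral>\<^sup>+xs. ennreal (real (zero_count n xs)) \<partial>measure_pmf (chain_path p f n))
     = (\<integral>\<^sup>+xs. (\<Sum>j\<in>{1..n}. ennreal (if xs ! j = 0 then 1 else 0)) \<partial>measure_pmf (chain_path p f n))"
    unfolding zc by (intro nn_integral_cong) (simp add: sum_ennreal)
  also have "\<dots> = (\<Sum>j\<in>{1..n}. \<integral>\<^sup>+xs. ennreal (if xs ! j = 0 then 1 else 0) \<partial>measure_pmf (chain_path p f n))"
    by (intro nn_integral_sum) auto
  also have "\<dots> = (\<Sum>j\<in>{1..n}. \<integral>\<^sup>+y. ennreal (0 ^ y) \<partial>measure_pmf (marg p f j))"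
  proof (intro sum.cong refl)
    fix j assume "j \<in> {1..n}"
    then have "marg p f j = map_pmf (\<lambda>xs. xs ! j) (chain_path p f n)"
      by (intro chain_path_nth[symmetric]) auto
    then show "(\<integral>\<^sup>+xs. ennreal (if xs ! j = 0 then 1 else 0) \<partial>measure_pmf (chain_path p f n))
      = (\<integral>\<^sup>+y. ennreal (0 ^ y) \<partial>measure_pmf (marg p f j))"
      by (simp add: power_0_left)
  qed
  finally show ?thesis .
qed

lemma T_bound:
  fixes q :: real
  assumes "0 < q" "q < 1"
  shows "(\<Sum>i\<in>{1..<j}. 1 * q ^ (j - i)) \<le> q / (1 - q)"
proof (induction j)
  case (Suc j)
  have "q * (\<Sum>i\<in>{1..<j}. 1 * q ^ (j - i)) \<le> q * (q / (1 - q))"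
    by (rule mult_left_mono[OF Suc.IH]) (use assms in auto)
  moreover have "0 \<le> q * (q / (1 - q))" using assms by simp
  ultimately have "(\<Sum>i\<in>{1..<Suc j}. 1 * q ^ (Suc j - i)) \<le> q + q * (q / (1 - q))"
    unfolding S_Suc[of "\<lambda>_. 1"] using assms
    by (split if_split) (intro conjI impI; linarith)
  also have "\<dots> = q / (1 - q)" using assms by (simp add: field_simps)
  finally show ?case .
qed (use assms in simp)

lemma S_bound:
  fixes q :: real
  assumes q: "0 < q" "q < 1" and f: "\<And>j. 1 \<le> j \<Longrightarrow> 0 \<le> f j"
    and mono: "\<And>i j. 1 \<le> i \<Longrightarrow> i \<le> j \<Longrightarrow> f i \<le> f j" and j: "2 \<le> j"
  shows "(\<Sum>i\<in>{1..<j}. f i * q ^ (j - i)) \<le> f (j - 1) * (q / (1 - q))"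
proof -
  have "(\<Sum>i\<in>{1..<j}. f i * q ^ (j - i)) \<le> (\<Sum>i\<in>{1..<j}. f (j - 1) * (1 * q ^ (j - i)))"
    using q by (intro sum_mono mult_right_mono) (auto intro!: mono simp del: One_nat_def)
  also have "\<dots> = f (j - 1) * (\<Sum>i\<in>{1..<j}. 1 * q ^ (j - i))" by (simp add: sum_distrib_left)
  also have "\<dots> \<le> f (j - 1) * (q / (1 - q))"
    using T_bound[OF q, of j] f[of "j - 1"] j by (intro mult_left_mono) auto
  finally show ?thesis .
qed

theorem proposition6:
  fixes p :: real and f :: "nat \<Rightarrow> real"
  assumes "1/2 < p" and "p < 1"
    and "\<And>j. 1 \<le> j \<Longrightarrow> 0 \<le> f j"
    and "\<And>i j. 1 \<le> i \<Longrightarrow> i \<le> j \<Longrightarrow> f i \<le> f j"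
    and "\<not> summable (\<lambda>j. exp (- ((1 - p) / (2 * p - 1)) * f (Suc j)))"
  shows "expected_zeros p f = \<infinity>"
proof -
  define q where "q = (1-p)/p"
  define c where "c = (1 - p) / (2 * p - 1)"
  have q: "0 < q" "q < 1" using assms(1,2) by (auto simp: q_def field_simps)
  have cq: "q / (1 - q) = c" using assms(1,2) by (simp add: q_def c_def field_simps)
  define g where "g j = (1 - q ^ j) * exp (- (\<Sum>i\<in>{1..<j}. f i * q ^ (j - i)))" for j
  define b where "b k = (1 - q) * exp (- c * f (Suc k))" for k
  have G0: "(\<integral>\<^sup>+y. ennreal (0 ^ y) \<partial>measure_pmf (marg p f j)) = ennreal (g j)" for j
    using marg_pgf[OF q_def q assms(3), where s=0 and j=j] by (simp add: g_def)
  have gb: "b k \<le> g (k + 2)" for k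
  proof -
    have "(\<Sum>i\<in>{1..<k+2}. f i * q ^ (k + 2 - i)) \<le> f (k + 2 - 1) * (q / (1 - q))"
      by (rule S_bound[OF q assms(3,4)]) simp_all
    then have "- (\<Sum>i\<in>{1..<k+2}. f i * q ^ (k + 2 - i)) \<ge> - (f (Suc k) * c)"
      using cq by simp
    then have "exp (- c * f (Suc k)) \<le> exp (- (\<Sum>i\<in>{1..<k+2}. f i * q ^ (k + 2 - i)))"
      by (simp add: mult.commute)
    moreover have "1 - q \<le> 1 - q ^ (k + 2)"
      using q power_decreasing[of 1 "k+2" q] by simp
    moreover have "0 \<le> 1 - q" using q by simp
    ultimately show ?thesis unfolding b_def g_def
      by (intro mult_mono) auto
  qed
  have b0: "0 \<le> b k" for k using q by (simp add: b_def)
  have g0: "0 \<le> g j" for j using q by (simp add: g_def power_le_one)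
  have bound: "(\<Sum>k<n. ennreal (b k)) \<le> expected_zeros p f" for n
  proof -
    have "(\<Sum>k<n. ennreal (b k)) \<le> (\<Sum>k<n. ennreal (g (k + 2)))"
      by (intro sum_mono ennreal_leI gb)
    also have "\<dots> = (\<Sum>j\<in>(\<lambda>k. k + 2) ` {..<n}. ennreal (g j))"
      by (subst sum.reindex) (auto simp: inj_on_def)
    also have "\<dots> \<le> (\<Sum>j\<in>{1..n+1}. ennreal (g j))"
      by (intro sum_mono2) auto
    also have "\<dots> = (\<integral>\<^sup>+xs. ennreal (real (zero_count (n+1) xs)) \<partial>measure_pmf (chain_path p f (n+1)))"
      unfolding zero_count_integral G0 ..
    also have "\<dots> \<le> expected_zeros p f"
      unfolding expected_zeros_def by (rule SUP_upper) simp
    finally show ?thesis .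
  qed
  have "\<not> summable b"
  proof
    assume "summable b"
    then have "summable (\<lambda>k. (1 - q) * exp (- c * f (Suc k)))" unfolding b_def[abs_def] .
    then have "summable (\<lambda>k. exp (- c * f (Suc k)))"
      using q summable_cmult_iff[of "1 - q"] by simp
    then show False using assms(5) by (simp add: c_def)
  qed
  then have "(\<Sum>k. ennreal (b k)) = \<top>"
    using summable_suminf_not_top[of b] b0 by blast
  moreover have "(\<Sum>k. ennreal (b k)) \<le> expected_zeros p f"
    by (intro suminf_le_const summableI bound)
  ultimately show ?thesis by (simp add: top_unique)
qed

end
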